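(* Let $(\mathfrak{g},B_1,B_2)$ be a decomposable Rota-Baxter system of Lie algebras and $\phi=B_1+B_2$. Then every element $x\in\phi(\mathfrak{g})$ can be written uniquely as $x=u_++u_-$ with $(u_+,u_-)\in\tilde{\mathfrak{g}}$.
   Context: A Rota-Baxter system of Lie algebras is a triple $(\mathfrak{g},B_1,B_2)$ with $\mathfrak{g}$ a Lie algebra over a field and $B_1,B_2:\mathfrak{g}\to\mathfrak{g}$ linear maps such that for all $u,v\in\mathfrak{g}$: $[B_1(u),B_1(v)]=B_1([B_1(u),B_1(v)]-[B_2(u),B_2(v)])$ and $[B_2(v),B_2(u)]=B_2([B_1(u),B_1(v)]-[B_2(u),B_2(v)])$. It is decomposable if $\operatorname{Ker}(B_1+B_2)\subseteq\operatorname{Ker}(B_1)$. The subspaces $B_1(\operatorname{Ker}B_2)\subseteq B_1(\mathfrak{g})$ and $B_2(\operatorname{Ker}B_1)\subseteq B_2(\mathfrak{g})$ are ideals of these Lie subalgebras, and $\theta:B_1(\mathfrak{g})/B_1(\operatorname{Ker}B_2)\to B_2(\mathfrak{g})/B_2(\operatorname{Ker}B_1)$, $\theta(\overline{B_1(u)})=\overline{B_2(u)}$, is a well-defined linear map. Set $\tilde{\mathfrak{g}}=\{(u_+,u_-)\in B_1(\mathfrak{g})\oplus B_2(\mathfrak{g})\mid\theta(\overline{u_+})=\overline{u_-}\}$. *)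

theory Defs
  imports Complex_Main
begin

definition lie_algebra ::
  "('k::field \<Rightarrow> 'a::ab_group_add \<Rightarrow> 'a) \<Rightarrow> ('a \<Rightarrow> 'a \<Rightarrow> 'a) \<Rightarrow> bool" where
  "lie_algebra sc br \<longleftrightarrow>
     vector_space sc \<and>
     (\<forall>x. Vector_Spaces.linear sc sc (br x)) \<and>
     (\<forall>y. Vector_Spaces.linear sc sc (\<lambda>x. br x y)) \<and>
     (\<forall>x. br x x = 0) \<and>
     (\<forall>x y z. br x (br y z) + br y (br z x) + br z (br x y) = 0)"

definition rota_baxter_system ::
  "('k::field \<Rightarrow> 'a::ab_group_add \<Rightarrow> 'a) \<Rightarrow> ('a \<Rightarrow> 'a \<Rightarrow> 'a) \<Rightarrow> ('a \<Rightarrow> 'a) \<Rightarrow> ('a \<Rightarrow> 'a) \<Rightarrow> bool" where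
  "rota_baxter_system sc br B1 B2 \<longleftrightarrow>
     lie_algebra sc br \<and>
     Vector_Spaces.linear sc sc B1 \<and> Vector_Spaces.linear sc sc B2 \<and>
     (\<forall>u v. br (B1 u) (B1 v) = B1 (br (B1 u) (B1 v) - br (B2 u) (B2 v))) \<and>
     (\<forall>u v. br (B2 v) (B2 u) = B2 (br (B1 u) (B1 v) - br (B2 u) (B2 v)))"

definition decomposable :: "('a::ab_group_add \<Rightarrow> 'a) \<Rightarrow> ('a \<Rightarrow> 'a) \<Rightarrow> bool" where
  "decomposable B1 B2 \<longleftrightarrow> {u. B1 u + B2 u = 0} \<subseteq> {u. B1 u = 0}"

text \<open>The set g-tilde: pairs (a,b) in B1(g) x B2(g) with theta(class of a) = class of b,
  where classes are cosets modulo B1(Ker B2) resp. B2(Ker B1), and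
  theta(class of B1 u) = class of B2 u.\<close>
definition gtilde :: "('a::ab_group_add \<Rightarrow> 'a) \<Rightarrow> ('a \<Rightarrow> 'a) \<Rightarrow> ('a \<times> 'a) set" where
  "gtilde B1 B2 = {(a, b). a \<in> range B1 \<and> b \<in> range B2 \<and>
     (\<exists>u. a - B1 u \<in> B1 ` {v. B2 v = 0} \<and> b - B2 u \<in> B2 ` {v. B1 v = 0})}"

end

theory Submission
  imports Defs
begin

theorem theorem6p6:
  fixes sc :: "'k::field \<Rightarrow> 'a::ab_group_add \<Rightarrow> 'a"
    and br :: "'a \<Rightarrow> 'a \<Rightarrow> 'a"
    and B1 B2 :: "'a \<Rightarrow> 'a"
  assumes "rota_baxter_system sc br B1 B2"
    and "decomposable B1 B2"
    and "x \<in> range (\<lambda>u. B1 u + B2 u)"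
  shows "\<exists>!p. p \<in> gtilde B1 B2 \<and> x = fst p + snd p"
proof -
  have h1: "module_hom sc sc B1" and h2: "module_hom sc sc B2"
    using assms(1) unfolding rota_baxter_system_def
    by (meson Vector_Spaces.linear.axioms(3))+
  have a1: "\<And>a b. B1 (a+b) = B1 a + B1 b" using module_hom.add[OF h1] .
  have a2: "\<And>a b. B2 (a+b) = B2 a + B2 b" using module_hom.add[OF h2] .
  have d1: "\<And>a b. B1 (a-b) = B1 a - B1 b" using module_hom.diff[OF h1] .
  have z1: "B1 0 = 0" using module_hom.zero[OF h1] .
  have z2: "B2 0 = 0" using module_hom.zero[OF h2] .
  obtain u where u: "x = B1 u + B2 u" using assms(3) by auto
  have ex: "(B1 u, B2 u) \<in> gtilde B1 B2"
    unfolding gtilde_def using z1 z2 by (auto intro!: exI[of _ u] image_eqI[of 0 _ 0])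
  have key: "\<exists>w. fst p = B1 w \<and> fst p + snd p = B1 w + B2 w" if "p \<in> gtilde B1 B2" for p
  proof -
    obtain a b where p: "p = (a,b)" by (cases p)
    from that obtain v k m where k: "B2 k = 0" "a - B1 v = B1 k" and m: "B1 m = 0" "b - B2 v = B2 m"
      unfolding gtilde_def p by auto
    have "a = B1 (v + k + m)" proof -
      have "a = B1 v + B1 k" using k(2) by (simp add: diff_eq_eq)
      then show ?thesis using m(1) a1 by simp
    qed
    moreover have "b = B2 (v + m) + B2 k" proof -
      have "b = B2 v + B2 m" using m(2) by (simp add: diff_eq_eq)
      then show ?thesis using k(1) a2 by simp
    qed
    then have "b = B2 (v + k + m)" using a2 by (simp add: algebra_simps)
    ultimately show ?thesis using p by auto
  qed
  show ?thesis
  proof (rule ex1I[of _ "(B1 u, B2 u)"])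
    show "(B1 u, B2 u) \<in> gtilde B1 B2 \<and> x = fst (B1 u, B2 u) + snd (B1 u, B2 u)" using ex u by simp
  next
    fix p assume p: "p \<in> gtilde B1 B2 \<and> x = fst p + snd p"
    then obtain w where w: "fst p = B1 w" "fst p + snd p = B1 w + B2 w" using key by blast
    have "B1 (w - u) + B2 (w - u) = 0"
    proof -
      have e: "B1 w + B2 w = B1 u + B2 u" using w p u by simp
      have "B1 (w - u) + B2 (w - u) = (B1 w + B2 w) - (B1 u + B2 u)"
        unfolding d1 module_hom.diff[OF h2] by (simp add: algebra_simps)
      then show ?thesis using e by simp
    qed
    then have "B1 (w - u) = 0" using assms(2) unfolding decomposable_def by auto
    then have "fst p = B1 u" using w d1 by simp
    moreover then have "snd p = B2 u" using p u by (metis add_left_cancel)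
    ultimately show "p = (B1 u, B2 u)" by (simp add: prod_eq_iff)
  qed
qed

end
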